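(* Let $f^0$ be $f$ with $\gamma_{\rm P}$ replaced by $0$. Then $f^0$ has a unique maximiser $(z^{Q,\star}(0),z^{S,\star}(0))$, which is the limit as $\gamma_{\rm P}\downarrow0$ of the maximiser of $f$. Setting $s^0_{i,n}=z^{S,i,\star}(0)$ and $q^0_{i,j,n}=\nu_jz^{Q,i,j,\star}(0)$, for all $i,j$: $$q^0_{i,j,n}=-\frac{\sigma}{\sqrt n}s^0_{i,n}\rho_j\ (j\ne i),\qquad q^0_{i,i,n}=\frac1{A_i}\Big(\frac1{c_i\nu_i}-\frac{\gamma_i\sigma}{\sqrt n}\rho_is^0_{i,n}\Big),\qquad s^0_{i,n}=-\frac{\sqrt n}{\sigma}\frac{\rho_i}{A_ic_i\nu_i(n-\pi_{i,n})},$$ where $A_i=\gamma_i+\frac{1}{c_i\nu_i^2}$ and $\pi_{i,n}=\|\rho\|^2-\rho_i^2+\frac{\gamma_i}{A_i}\rho_i^2\in[0,n)$. In particular $\mathrm{sgn}(s^0_{i,n})=-\mathrm{sgn}(\rho_i)$, $z^{Q,i,i,\star}(0)>0$ for all $i$, and $\mathrm{sgn}(z^{Q,i,j,\star}(0))=\mathrm{sgn}(\rho_i\rho_j)$ for $j\ne i$.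
   Context: Fix an integer $n\ge1$ and parameters $\sigma>0$, $\gamma_{\rm P}>0$, and for each $i\in\{1,\dots,n\}$: $c_i>0$, $\gamma_i>0$, $\nu_i>0$, $\rho_i\in(-1,1)$. Write $\nu=(\nu_1,\dots,\nu_n)^\top$, $\rho=(\rho_1,\dots,\rho_n)^\top$, $\|\rho\|$ its Euclidean norm. The variables are a matrix $z^Q=(z^{Q,i,j})_{i,j}\in\mathbb{R}^{n\times n}$ ($i$ row, $j$ column) and a vector $z^S=(z^{S,1},\dots,z^{S,n})^\top\in\mathbb{R}^n$. Define $f:\mathbb{R}^{n\times n}\times\mathbb{R}^n\to\mathbb{R}$ by $$f(z^Q,z^S)=-\frac1n\sum_{i=1}^n\Big(\frac{(z^{Q,i,i})^2}{2c_i}+\frac{\gamma_i}{2}\sum_{j=1}^n\nu_j^2(z^{Q,i,j})^2+\frac{\gamma_i\sigma^2}{2}(z^{S,i})^2+\frac{\gamma_i\sigma}{\sqrt n}z^{S,i}\sum_{j=1}^n\rho_j\nu_jz^{Q,i,j}-\frac{z^{Q,i,i}}{c_i}\Big)-\frac{\gamma_{\rm P}}{2n^2}\sum_{i=1}^n\Big(\Big(\nu_i-\nu_i\sum_{j=1}^nz^{Q,j,i}-\frac{\rho_i\sigma}{\sqrt n}\sum_{j=1}^nz^{S,j}\Big)^2+\frac{(1-\rho_i^2)\sigma^2}{n}\Big(\sum_{j=1}^nz^{S,j}\Big)^2\Big).$$ For $\gamma_{\rm P}>0$, $f$ has a unique global maximiser. *)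

theory Defs
  imports "HOL-Analysis.Analysis"
begin

text \<open>Index set {1..n} is rendered as a finite type 'n, with n = CARD('n).
  z^Q is a matrix real^'n^'n with (zQ $ i $ j) = z^{Q,i,j} (row i, column j);
  z^S is a vector real^'n.\<close>

definition fobj :: "real \<Rightarrow> real \<Rightarrow> ('n::finite \<Rightarrow> real) \<Rightarrow> ('n \<Rightarrow> real) \<Rightarrow> ('n \<Rightarrow> real)
    \<Rightarrow> ('n \<Rightarrow> real) \<Rightarrow> (real^'n^'n) \<times> (real^'n) \<Rightarrow> real" where
  "fobj \<sigma> gP c gam nu rho z =
    (let zQ = fst z; zS = snd z; n = real CARD('n) in
      - (1 / n) * (\<Sum>i\<in>UNIV.
          (zQ $ i $ i)^2 / (2 * c i)
          + gam i / 2 * (\<Sum>j\<in>UNIV. (nu j)^2 * (zQ $ i $ j)^2)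
          + gam i * \<sigma>^2 / 2 * (zS $ i)^2
          + gam i * \<sigma> / sqrt n * (zS $ i) * (\<Sum>j\<in>UNIV. rho j * nu j * (zQ $ i $ j))
          - (zQ $ i $ i) / c i)
      - gP / (2 * n^2) * (\<Sum>i\<in>UNIV.
          (nu i - nu i * (\<Sum>j\<in>UNIV. zQ $ j $ i) - rho i * \<sigma> / sqrt n * (\<Sum>j\<in>UNIV. zS $ j))^2
          + (1 - (rho i)^2) * \<sigma>^2 / n * (\<Sum>j\<in>UNIV. zS $ j)^2))"

definition is_global_max :: "('a \<Rightarrow> real) \<Rightarrow> 'a \<Rightarrow> bool" where
  "is_global_max F z \<longleftrightarrow> (\<forall>w. F w \<le> F z)"

definition Acoef :: "('n \<Rightarrow> real) \<Rightarrow> ('n \<Rightarrow> real) \<Rightarrow> ('n \<Rightarrow> real) \<Rightarrow> 'n \<Rightarrow> real" where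
  "Acoef c gam nu i = gam i + 1 / (c i * (nu i)^2)"

definition pi_coef :: "('n::finite \<Rightarrow> real) \<Rightarrow> ('n \<Rightarrow> real) \<Rightarrow> ('n \<Rightarrow> real) \<Rightarrow> ('n \<Rightarrow> real) \<Rightarrow> 'n \<Rightarrow> real" where
  "pi_coef c gam nu rho i =
     (\<Sum>j\<in>UNIV. (rho j)^2) - (rho i)^2 + gam i / Acoef c gam nu i * (rho i)^2"

end

theory Submission
  imports Defs
begin

lemma abstract_max:
  fixes F Q P :: "'a::euclidean_space \<Rightarrow> real"
  assumes cont: "continuous_on UNIV F"
    and eq: "\<And>z. F z = K - Q (z - z0) - P z"
    and Qge: "\<And>d. Q d \<ge> m * (norm d)^2" and m: "m > 0"
    and Pge: "\<And>z. P z \<ge> 0"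
    and Qmid: "\<And>x y. Q ((1/2) *\<^sub>R (x+y)) + Q ((1/2) *\<^sub>R (x-y)) = (Q x + Q y)/2"
    and Pmid: "\<And>a b. P ((1/2) *\<^sub>R (a+b)) \<le> (P a + P b)/2"
  shows "(\<exists>!z. is_global_max F z) \<and> (\<forall>z. is_global_max F z \<longrightarrow> m * (norm (z - z0))^2 \<le> P z0)"
proof -
  have bnd: "m * (norm (z - z0))^2 \<le> P z0" if "F z0 \<le> F z" for z
  proof -
    have "K - Q (z - z0) - P z \<ge> K - Q (z0 - z0) - P z0" using that eq by simp
    moreover have "Q 0 \<le> 0" using Qmid[of 0 0] by simp
    ultimately have "Q (z - z0) \<le> P z0" using Pge[of z] by simp
    then show ?thesis using Qge[of "z - z0"] by simp
  qed
  define S where "S = {z. F z0 \<le> F z}"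
  have "closed S" unfolding S_def by (rule closed_Collect_le) (use cont in auto)
  moreover have "bounded S"
  proof (rule bounded_subset[OF bounded_cball[of z0 "sqrt (P z0 / m)"]])
    show "S \<subseteq> cball z0 (sqrt (P z0 / m))"
    proof
      fix z assume "z \<in> S"
      then have "m * (norm (z - z0))^2 \<le> P z0" using bnd unfolding S_def by simp
      then have "(norm (z - z0))^2 \<le> P z0 / m" using m by (simp add: field_simps)
      then have "norm (z - z0) \<le> sqrt (P z0 / m)" by (simp add: real_le_rsqrt)
      then show "z \<in> cball z0 (sqrt (P z0 / m))" by (simp add: dist_norm norm_minus_commute)
    qed
  qed
  ultimately have "compact S" by (simp add: compact_eq_bounded_closed)
  moreover have "S \<noteq> {}" unfolding S_def by auto
  ultimately obtain x where x: "x \<in> S" "\<forall>y\<in>S. F y \<le> F x"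
    using continuous_attains_sup[of S F] continuous_on_subset[OF cont] by blast
  have gx: "is_global_max F x" unfolding is_global_max_def
  proof
    fix w show "F w \<le> F x"
      using x unfolding S_def by (cases "F z0 \<le> F w") auto
  qed
  have uniq: "a = b" if a: "is_global_max F a" and b: "is_global_max F b" for a b
  proof -
    define u where "u = a - z0"
    define v where "v = b - z0"
    have mid: "(1/2) *\<^sub>R (a + b) - z0 = (1/2) *\<^sub>R (u + v)"
    proof -
      have h: "(1/2::real) *\<^sub>R z0 + (1/2) *\<^sub>R z0 = z0" by (simp flip: scaleR_add_left)
      show ?thesis unfolding u_def v_def using h by (simp add: algebra_simps)
    qed
    have uv: "(1/2) *\<^sub>R (u - v) = (1/2) *\<^sub>R (a - b)" unfolding u_def v_def by (simp add: algebra_simps)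
    have "F ((1/2) *\<^sub>R (a + b)) \<le> F a" "F ((1/2) *\<^sub>R (a + b)) \<le> F b"
      using a b unfolding is_global_max_def by auto
    moreover have "F ((1/2) *\<^sub>R (a + b)) = K - Q ((1/2) *\<^sub>R (u + v)) - P ((1/2) *\<^sub>R (a + b))"
      using eq mid by simp
    moreover have "F a = K - Q u - P a" "F b = K - Q v - P b" using eq unfolding u_def v_def by auto
    ultimately have "Q ((1/2) *\<^sub>R (u - v)) \<le> 0"
      using Qmid[of u v] Pmid[of a b] by argo
    then have "m * (norm ((1/2) *\<^sub>R (a - b)))^2 \<le> 0" using Qge[of "(1/2) *\<^sub>R (a - b)"] uv by simp
    then have "norm ((1/2) *\<^sub>R (a - b)) = 0" using m
      by (smt (verit) mult_pos_pos norm_ge_zero zero_less_power)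
    then show "a = b" by simp
  qed
  have "\<exists>!z. is_global_max F z" using gx uniq by blast
  moreover have "\<forall>z. is_global_max F z \<longrightarrow> m * (norm (z - z0))^2 \<le> P z0"
    using bnd unfolding is_global_max_def by blast
  ultimately show ?thesis by blast
qed


locale mt =
  fixes \<sigma> :: real and c gam nu rho :: "'n::finite \<Rightarrow> real"
  assumes sig: "\<sigma> > 0" and cpos: "\<And>i. c i > 0" and gpos: "\<And>i. gam i > 0"
    and nupos: "\<And>i. nu i > 0" and rhob: "\<And>i. -1 < rho i \<and> rho i < 1"
begin


definition Qd :: "'n \<Rightarrow> (real^'n^'n) \<times> (real^'n) \<Rightarrow> real" where
  "Qd i d = (fst d $ i $ i)^2 / (2 * c i)
          + gam i / 2 * (\<Sum>j\<in>UNIV. (nu j)^2 * (fst d $ i $ j)^2)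
          + gam i * \<sigma>^2 / 2 * (snd d $ i)^2
          + gam i * \<sigma> / sqrt (real CARD('n)) * (snd d $ i) * (\<Sum>j\<in>UNIV. rho j * nu j * (fst d $ i $ j))"

definition Bf :: "'n \<Rightarrow> (real^'n^'n) \<times> (real^'n) \<Rightarrow> (real^'n^'n) \<times> (real^'n) \<Rightarrow> real" where
  "Bf i a b = (fst a $ i $ i) * (fst b $ i $ i) / (2 * c i)
          + gam i / 2 * (\<Sum>j\<in>UNIV. (nu j)^2 * (fst a $ i $ j) * (fst b $ i $ j))
          + gam i * \<sigma>^2 / 2 * (snd a $ i) * (snd b $ i)
          + gam i * \<sigma> / sqrt (real CARD('n)) / 2 * ((snd a $ i) * (\<Sum>j\<in>UNIV. rho j * nu j * (fst b $ i $ j))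
                + (snd b $ i) * (\<Sum>j\<in>UNIV. rho j * nu j * (fst a $ i $ j)))"

definition Pen :: "(real^'n^'n) \<times> (real^'n) \<Rightarrow> real" where
  "Pen z = (\<Sum>i\<in>UNIV.
          (nu i - nu i * (\<Sum>j\<in>UNIV. fst z $ j $ i) - rho i * \<sigma> / sqrt (real CARD('n)) * (\<Sum>j\<in>UNIV. snd z $ j))^2
          + (1 - (rho i)^2) * \<sigma>^2 / real CARD('n) * (\<Sum>j\<in>UNIV. snd z $ j)^2)"

lemma fobj_split: "fobj \<sigma> g c gam nu rho z =
   - (1/real CARD('n)) * (\<Sum>i\<in>UNIV. Qd i z - fst z $ i $ i / c i) - g / (2 * real CARD('n)^2) * Pen z"
  unfolding fobj_def Qd_def Pen_def Let_def by (simp add: algebra_simps)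

lemma Qd_add: "Qd i (a + b) = Qd i a + 2 * Bf i a b + Qd i b"
  unfolding Qd_def Bf_def
  by (simp add: algebra_simps power2_eq_square sum.distrib sum_distrib_left add_divide_distrib sum_divide_distrib diff_divide_distrib)

lemma Qd_mid: "Qd i ((1/2) *\<^sub>R (x + y)) + Qd i ((1/2) *\<^sub>R (x - y)) = (Qd i x + Qd i y) / 2"
  unfolding Qd_def
  by (simp add: algebra_simps power2_eq_square sum.distrib sum_distrib_left sum_subtractf sum_divide_distrib add_divide_distrib diff_divide_distrib)


lemma card_pos: "real CARD('n) \<ge> 1"
  by (simp add: Suc_le_eq)

lemma sq_sq: "(sqrt (real CARD('n)))^2 = real CARD('n)"
  by simp

lemma sq_pos: "sqrt (real CARD('n)) > 0"
  using card_pos by simp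

lemma elem_ineq:
  fixes y t r :: real
  assumes "\<bar>r\<bar> \<le> 1"
  shows "y^2 + 2*t*r*y + t^2 \<ge> (1 - \<bar>r\<bar>) * (y^2 + t^2)"
proof -
  have "\<bar>2*t*r*y\<bar> \<le> \<bar>r\<bar> * (y^2 + t^2)"
  proof -
    have "(\<bar>t\<bar> - \<bar>y\<bar>)^2 = t^2 + y^2 - 2*\<bar>t\<bar>*\<bar>y\<bar>"
      by (simp add: power2_diff)
    moreover have "0 \<le> (\<bar>t\<bar> - \<bar>y\<bar>)^2" by simp
    ultimately have "2*\<bar>t\<bar>*\<bar>y\<bar> \<le> y^2 + t^2" by linarith
    then have "\<bar>r\<bar> * (2*\<bar>t\<bar>*\<bar>y\<bar>) \<le> \<bar>r\<bar> * (y^2 + t^2)" by (simp add: mult_left_mono)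
    then show ?thesis by (simp add: abs_mult algebra_simps)
  qed
  moreover have "(1 - \<bar>r\<bar>) * (y^2 + t^2) = y^2 + t^2 - \<bar>r\<bar> * (y^2 + t^2)"
    by (simp add: algebra_simps)
  moreover have "- (2*t*r*y) \<le> \<bar>2*t*r*y\<bar>" by simp
  ultimately show ?thesis by linarith
qed

definition mu :: real where
  "mu = Min ((\<lambda>(i,j). gam i * (1 - \<bar>rho j\<bar>) * min ((nu j)^2) (\<sigma>^2 / real CARD('n)) / 2) ` UNIV)"

lemma mu_le: "mu \<le> gam i * (1 - \<bar>rho j\<bar>) * min ((nu j)^2) (\<sigma>^2 / real CARD('n)) / 2"
  unfolding mu_def by (rule Min_le) (auto intro: image_eqI[where x="(i,j)"])

lemma mu_pos: "mu > 0"
proof -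
  have "\<forall>x\<in>((\<lambda>(i,j). gam i * (1 - \<bar>rho j\<bar>) * min ((nu j)^2) (\<sigma>^2 / real CARD('n)) / 2) ` UNIV). x > 0"
  proof
    fix x assume "x \<in> ((\<lambda>(i,j). gam i * (1 - \<bar>rho j\<bar>) * min ((nu j)^2) (\<sigma>^2 / real CARD('n)) / 2) ` UNIV)"
    then obtain i j where x: "x = gam i * (1 - \<bar>rho j\<bar>) * min ((nu j)^2) (\<sigma>^2 / real CARD('n)) / 2" by auto
    have "1 - \<bar>rho j\<bar> > 0" using rhob[of j] by auto
    moreover have "min ((nu j)^2) (\<sigma>^2 / real CARD('n)) > 0" using nupos[of j] sig card_pos by simp
    ultimately show "x > 0" unfolding x using gpos[of i] by (intro divide_pos_pos mult_pos_pos) auto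
  qed
  then show ?thesis unfolding mu_def by (subst Min_gr_iff) auto
qed

lemma Qd_ge: "Qd i d \<ge> mu * ((\<Sum>j\<in>UNIV. (fst d $ i $ j)^2) + (snd d $ i)^2)"
proof -
  define t where "t = \<sigma> * snd d $ i / sqrt (real CARD('n))"
  have t2: "t^2 = \<sigma>^2 * (snd d $ i)^2 / real CARD('n)"
    unfolding t_def by (simp add: power_divide power_mult_distrib)
  have eq: "Qd i d = (fst d $ i $ i)^2 / (2 * c i) + gam i / 2 *
     (\<Sum>j\<in>UNIV. (nu j * fst d $ i $ j)^2 + 2 * t * rho j * (nu j * fst d $ i $ j) + t^2)"
  proof -
    have "(\<Sum>j\<in>UNIV. (nu j * fst d $ i $ j)^2 + 2 * t * rho j * (nu j * fst d $ i $ j) + t^2)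
      = (\<Sum>j\<in>UNIV. (nu j)^2 * (fst d $ i $ j)^2) + 2 * t * (\<Sum>j\<in>UNIV. rho j * nu j * (fst d $ i $ j))
        + real CARD('n) * t^2"
      by (simp add: sum.distrib sum_distrib_left power_mult_distrib algebra_simps)
    also have "real CARD('n) * t^2 = \<sigma>^2 * (snd d $ i)^2" using t2 card_pos by simp
    finally show ?thesis unfolding Qd_def t_def by (simp add: algebra_simps)
  qed
  have trm: "gam i / 2 * ((nu j * fst d $ i $ j)^2 + 2 * t * rho j * (nu j * fst d $ i $ j) + t^2)
      \<ge> mu * ((fst d $ i $ j)^2 + (snd d $ i)^2)" for j
  proof -
    let ?m = "min ((nu j)^2) (\<sigma>^2 / real CARD('n))"
    have r: "\<bar>rho j\<bar> \<le> 1" using rhob[of j] by auto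
    have h1: "(nu j * fst d $ i $ j)^2 + 2 * t * rho j * (nu j * fst d $ i $ j) + t^2
       \<ge> (1 - \<bar>rho j\<bar>) * ((nu j * fst d $ i $ j)^2 + t^2)"
      using elem_ineq[OF r, of "nu j * fst d $ i $ j" t] by (simp add: algebra_simps)
    have h2: "(nu j * fst d $ i $ j)^2 + t^2 \<ge> ?m * ((fst d $ i $ j)^2 + (snd d $ i)^2)"
    proof -
      have "(nu j * fst d $ i $ j)^2 \<ge> ?m * (fst d $ i $ j)^2"
        by (simp add: power_mult_distrib mult_right_mono)
      moreover have "t^2 \<ge> ?m * (snd d $ i)^2" unfolding t2
        using mult_right_mono[of ?m "\<sigma>^2 / real CARD('n)" "(snd d $ i)^2"] by simp
      ultimately show ?thesis by (simp add: algebra_simps)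
    qed
    have m0: "?m \<ge> 0" by simp
    have "mu * ((fst d $ i $ j)^2 + (snd d $ i)^2) \<le> gam i * (1 - \<bar>rho j\<bar>) * ?m / 2 * ((fst d $ i $ j)^2 + (snd d $ i)^2)"
      by (rule mult_right_mono[OF mu_le]) simp
    also have "\<dots> = gam i / 2 * (1 - \<bar>rho j\<bar>) * (?m * ((fst d $ i $ j)^2 + (snd d $ i)^2))" by simp
    also have "\<dots> \<le> gam i / 2 * (1 - \<bar>rho j\<bar>) * ((nu j * fst d $ i $ j)^2 + t^2)"
      by (rule mult_left_mono[OF h2]) (use gpos[of i] r in simp)
    also have "\<dots> \<le> gam i / 2 * ((nu j * fst d $ i $ j)^2 + 2 * t * rho j * (nu j * fst d $ i $ j) + t^2)"
      using mult_left_mono[OF h1, of "gam i / 2"] gpos[of i] by (simp add: mult.assoc)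
    finally show ?thesis .
  qed
  have "mu * ((\<Sum>j\<in>UNIV. (fst d $ i $ j)^2) + (snd d $ i)^2)
      \<le> (\<Sum>j\<in>UNIV. mu * ((fst d $ i $ j)^2 + (snd d $ i)^2))"
  proof -
    have "(\<Sum>j\<in>UNIV. mu * ((fst d $ i $ j)^2 + (snd d $ i)^2))
       = mu * (\<Sum>j\<in>UNIV. (fst d $ i $ j)^2) + real CARD('n) * (mu * (snd d $ i)^2)"
      by (simp add: sum.distrib sum_distrib_left algebra_simps)
    moreover have "real CARD('n) * (mu * (snd d $ i)^2) \<ge> mu * (snd d $ i)^2"
      using card_pos mu_pos mult_right_mono[of 1 "real CARD('n)" "mu * (snd d $ i)^2"] by simp
    ultimately show ?thesis by (simp add: algebra_simps)
  qed
  also have "\<dots> \<le> (\<Sum>j\<in>UNIV. gam i / 2 * ((nu j * fst d $ i $ j)^2 + 2 * t * rho j * (nu j * fst d $ i $ j) + t^2))"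
    by (rule sum_mono) (rule trm)
  also have "\<dots> \<le> Qd i d" unfolding eq sum_distrib_left[symmetric] using cpos[of i] by simp
  finally show ?thesis .
qed


lemma nu_ne: "nu j \<noteq> 0" using nupos[of j] by simp

lemma A_pos: "Acoef c gam nu i > 0"
  unfolding Acoef_def using gpos[of i] cpos[of i] nupos[of i] by (simp add: add_pos_pos)

lemma gA_lt1: "gam i / Acoef c gam nu i < 1"
proof -
  have "1 / (c i * (nu i)^2) > 0" using cpos[of i] nupos[of i] by simp
  then have "gam i < Acoef c gam nu i" unfolding Acoef_def by simp
  then show ?thesis using A_pos[of i] by simp
qed

lemma sumrho_split: "(\<Sum>j\<in>UNIV. (rho j)^2) - (rho i)^2 = (\<Sum>j\<in>UNIV - {i}. (rho j)^2)"
  by (simp add: sum.remove[of UNIV i])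

lemma pi_nonneg: "pi_coef c gam nu rho i \<ge> 0"
proof -
  have "(\<Sum>j\<in>UNIV - {i}. (rho j)^2) \<ge> 0" by (simp add: sum_nonneg)
  moreover have "gam i / Acoef c gam nu i * (rho i)^2 \<ge> 0" using gpos[of i] A_pos[of i] by simp
  ultimately show ?thesis unfolding pi_coef_def sumrho_split by simp
qed

lemma pi_lt: "pi_coef c gam nu rho i < real CARD('n)"
proof -
  have "gam i / Acoef c gam nu i * (rho i)^2 \<le> (rho i)^2"
    using gA_lt1[of i] mult_right_mono[of "gam i / Acoef c gam nu i" 1 "(rho i)^2"] by simp
  then have "pi_coef c gam nu rho i \<le> (\<Sum>j\<in>UNIV. (rho j)^2)" unfolding pi_coef_def by simp
  also have "\<dots> < (\<Sum>j\<in>(UNIV::'n set). 1)"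
  proof (rule sum_strict_mono)
    fix j :: 'n
    have "\<bar>rho j\<bar> < 1" using rhob[of j] by auto
    then have "\<bar>rho j\<bar>^2 < 1^2" by (intro power_strict_mono) auto
    then show "(rho j)^2 < 1" by simp
  qed auto
  finally show ?thesis by simp
qed

definition tt :: "'n \<Rightarrow> real" where
  "tt i = - rho i / (Acoef c gam nu i * c i * nu i * (real CARD('n) - pi_coef c gam nu rho i))"

definition qd :: "'n \<Rightarrow> real" where
  "qd i = (1 / (c i * nu i) - gam i * tt i * rho i) / Acoef c gam nu i"

definition z0 :: "(real^'n^'n) \<times> (real^'n)" where
  "z0 = ((\<chi> i j. if j = i then qd i / nu i else - tt i * rho j / nu j),
         (\<chi> i. sqrt (real CARD('n)) * tt i / \<sigma>))"

lemma z0Q: "fst z0 $ i $ j = (if j = i then qd i / nu i else - tt i * rho j / nu j)"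
  unfolding z0_def by simp

lemma z0S: "snd z0 $ i = sqrt (real CARD('n)) * tt i / \<sigma>"
  unfolding z0_def by simp

lemma s0_tt: "\<sigma> / sqrt (real CARD('n)) * snd z0 $ i = tt i"
  unfolding z0S using sig sq_pos by simp

lemma F1: "j \<noteq> i \<Longrightarrow> nu j * fst z0 $ i $ j + tt i * rho j = 0"
  unfolding z0Q using nupos[of j] by simp

lemma F2: "gam i * nu i * (nu i * fst z0 $ i $ i + tt i * rho i) + (fst z0 $ i $ i - 1) / c i = 0"
proof -
  have A: "Acoef c gam nu i * qd i = 1 / (c i * nu i) - gam i * tt i * rho i"
    unfolding qd_def using A_pos[of i] by simp
  have "gam i * nu i * (qd i + tt i * rho i) + (qd i / nu i - 1) / c i
     = nu i * (Acoef c gam nu i * qd i + gam i * tt i * rho i - 1 / (c i * nu i))"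
    unfolding Acoef_def using cpos[of i] nupos[of i]
    by (simp add: field_simps power2_eq_square)
  also have "\<dots> = 0" using A by simp
  finally show ?thesis unfolding z0Q using nupos[of i] by simp
qed

lemma F3: "real CARD('n) * tt i + (\<Sum>j\<in>UNIV. rho j * nu j * fst z0 $ i $ j) = 0"
proof -
  have "(\<Sum>j\<in>UNIV. rho j * nu j * fst z0 $ i $ j)
      = rho i * qd i + (\<Sum>j\<in>UNIV - {i}. rho j * nu j * fst z0 $ i $ j)"
    using nupos[of i] by (simp add: sum.remove[of UNIV i] z0Q)
  also have "(\<Sum>j\<in>UNIV - {i}. rho j * nu j * fst z0 $ i $ j) = (\<Sum>j\<in>UNIV - {i}. - tt i * (rho j)^2)"
    by (rule sum.cong) (auto simp: z0Q power2_eq_square nu_ne)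
  also have "\<dots> = - tt i * ((\<Sum>j\<in>UNIV. (rho j)^2) - (rho i)^2)"
    unfolding sumrho_split by (simp add: sum_distrib_left)
  finally have S: "(\<Sum>j\<in>UNIV. rho j * nu j * fst z0 $ i $ j)
     = rho i * qd i - tt i * ((\<Sum>j\<in>UNIV. (rho j)^2) - (rho i)^2)" by simp
  have np: "real CARD('n) - pi_coef c gam nu rho i > 0" using pi_lt[of i] by simp
  have key: "tt i * (real CARD('n) - pi_coef c gam nu rho i) = - rho i / (Acoef c gam nu i * c i * nu i)"
    unfolding tt_def using np by simp
  have "real CARD('n) * tt i + rho i * qd i - tt i * ((\<Sum>j\<in>UNIV. (rho j)^2) - (rho i)^2)
      = tt i * (real CARD('n) - pi_coef c gam nu rho i) + rho i / (Acoef c gam nu i * c i * nu i)"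
    unfolding qd_def pi_coef_def using A_pos[of i] cpos[of i] nupos[of i]
    by (simp add: field_simps power2_eq_square)
  also have "\<dots> = 0" using key by simp
  finally show ?thesis using S by simp
qed

lemma lin0: "2 * Bf i z0 d - fst d $ i $ i / c i = 0"
proof -
  let ?n = "real CARD('n)" and ?sq = "sqrt (real CARD('n))"
  have e1: "gam i * (\<Sum>j\<in>UNIV. (nu j)^2 * fst z0 $ i $ j * fst d $ i $ j)
      + gam i * \<sigma> / ?sq * snd z0 $ i * (\<Sum>j\<in>UNIV. rho j * nu j * fst d $ i $ j)
      = (\<Sum>j\<in>UNIV. fst d $ i $ j * (gam i * nu j * (nu j * fst z0 $ i $ j + tt i * rho j)))"
  proof -
    have "gam i * \<sigma> / ?sq * snd z0 $ i = gam i * (\<sigma> / ?sq * snd z0 $ i)"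
      by (simp only: times_divide_eq_left times_divide_eq_right mult.assoc)
    also have "\<dots> = gam i * tt i" by (simp only: s0_tt)
    finally have "gam i * \<sigma> / ?sq * snd z0 $ i = gam i * tt i" .
    then show ?thesis
      by (simp add: sum_distrib_left sum.distrib[symmetric] algebra_simps power2_eq_square)
  qed
  have e2: "(\<Sum>j\<in>UNIV. fst d $ i $ j * (gam i * nu j * (nu j * fst z0 $ i $ j + tt i * rho j)))
      = fst d $ i $ i * (gam i * nu i * (nu i * fst z0 $ i $ i + tt i * rho i))"
  proof -
    have "(\<Sum>j\<in>UNIV. fst d $ i $ j * (gam i * nu j * (nu j * fst z0 $ i $ j + tt i * rho j)))
       = (\<Sum>j\<in>UNIV. if j = i then fst d $ i $ i * (gam i * nu i * (nu i * fst z0 $ i $ i + tt i * rho i)) else 0)"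
      by (rule sum.cong) (auto simp: F1)
    then show ?thesis by simp
  qed
  have e3: "gam i * \<sigma>^2 * snd z0 $ i * snd d $ i
      + gam i * \<sigma> / ?sq * snd d $ i * (\<Sum>j\<in>UNIV. rho j * nu j * fst z0 $ i $ j) = 0"
  proof -
    have "\<sigma>^2 * snd z0 $ i = \<sigma> / ?sq * (?n * tt i)"
      unfolding z0S using sig sq_pos card_pos by (simp add: field_simps power2_eq_square)
    then have "gam i * \<sigma>^2 * snd z0 $ i * snd d $ i
      + gam i * \<sigma> / ?sq * snd d $ i * (\<Sum>j\<in>UNIV. rho j * nu j * fst z0 $ i $ j)
      = gam i * \<sigma> / ?sq * snd d $ i * (?n * tt i + (\<Sum>j\<in>UNIV. rho j * nu j * fst z0 $ i $ j))"
      by (simp add: algebra_simps)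
    then show ?thesis using F3[of i] by simp
  qed
  have "2 * Bf i z0 d - fst d $ i $ i / c i
     = fst d $ i $ i * (gam i * nu i * (nu i * fst z0 $ i $ i + tt i * rho i) + (fst z0 $ i $ i - 1) / c i)
       + (gam i * \<sigma>^2 * snd z0 $ i * snd d $ i
      + gam i * \<sigma> / ?sq * snd d $ i * (\<Sum>j\<in>UNIV. rho j * nu j * fst z0 $ i $ j))"
    using e1 e2 unfolding Bf_def by (simp add: algebra_simps diff_divide_distrib add_divide_distrib)
  also have "\<dots> = 0" using F2[of i] e3 by simp
  finally show ?thesis .
qed

end

context mt begin

definition Qall :: "(real^'n^'n) \<times> (real^'n) \<Rightarrow> real" where
  "Qall d = (1 / real CARD('n)) * (\<Sum>i\<in>UNIV. Qd i d)"

lemma expand: "fobj \<sigma> g c gam nu rho z =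
   fobj \<sigma> 0 c gam nu rho z0 - Qall (z - z0) - g / (2 * (real CARD('n))^2) * Pen z"
proof -
  have "(\<Sum>i\<in>UNIV. Qd i z - fst z $ i $ i / c i)
     = (\<Sum>i\<in>UNIV. (Qd i z0 - fst z0 $ i $ i / c i) + Qd i (z - z0))"
  proof (rule sum.cong)
    fix i :: 'n
    have "Qd i z = Qd i (z0 + (z - z0))" by simp
    also have "\<dots> = Qd i z0 + 2 * Bf i z0 (z - z0) + Qd i (z - z0)" by (rule Qd_add)
    finally have "Qd i z = Qd i z0 + fst (z - z0) $ i $ i / c i + Qd i (z - z0)"
      using lin0[of i "z - z0"] by simp
    then show "Qd i z - fst z $ i $ i / c i = (Qd i z0 - fst z0 $ i $ i / c i) + Qd i (z - z0)"
      by (simp add: diff_divide_distrib)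
  qed simp
  also have "\<dots> = (\<Sum>i\<in>UNIV. Qd i z0 - fst z0 $ i $ i / c i) + (\<Sum>i\<in>UNIV. Qd i (z - z0))"
    by (rule sum.distrib)
  finally have e: "(\<Sum>i\<in>UNIV. Qd i z - fst z $ i $ i / c i)
     = (\<Sum>i\<in>UNIV. Qd i z0 - fst z0 $ i $ i / c i) + (\<Sum>i\<in>UNIV. Qd i (z - z0))" .
  show ?thesis unfolding fobj_split[of g z] fobj_split[of 0 z0] Qall_def e
    by (simp add: algebra_simps)
qed

lemma normsq_vec: "(norm (x::'a::real_inner^'n))^2 = (\<Sum>i\<in>UNIV. (norm (x $ i))^2)"
  by (simp add: power2_norm_eq_inner inner_vec_def)

lemma Qall_ge: "Qall d \<ge> (mu / real CARD('n)) * (norm d)^2"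
proof -
  have nd: "(norm d)^2 = (\<Sum>i\<in>UNIV. (\<Sum>j\<in>UNIV. (fst d $ i $ j)^2)) + (\<Sum>i\<in>UNIV. (snd d $ i)^2)"
  proof -
    have "d = (fst d, snd d)" by simp
    then have "(norm d)^2 = (norm (fst d))^2 + (norm (snd d))^2"
      by (metis norm_Pair real_sqrt_pow2 add_nonneg_nonneg zero_le_power2)
    then show ?thesis by (simp add: normsq_vec)
  qed
  have "mu * (norm d)^2 = (\<Sum>i\<in>UNIV. mu * ((\<Sum>j\<in>UNIV. (fst d $ i $ j)^2) + (snd d $ i)^2))"
    unfolding nd by (simp add: sum_distrib_left sum.distrib algebra_simps)
  also have "\<dots> \<le> (\<Sum>i\<in>UNIV. Qd i d)" by (rule sum_mono) (rule Qd_ge)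
  finally show ?thesis unfolding Qall_def using card_pos
    by (simp add: divide_right_mono)
qed

lemma Qall_mid: "Qall ((1/2) *\<^sub>R (x+y)) + Qall ((1/2) *\<^sub>R (x-y)) = (Qall x + Qall y)/2"
proof -
  have "(\<Sum>i\<in>UNIV. Qd i ((1/2) *\<^sub>R (x+y))) + (\<Sum>i\<in>UNIV. Qd i ((1/2) *\<^sub>R (x-y)))
     = ((\<Sum>i\<in>UNIV. Qd i x) + (\<Sum>i\<in>UNIV. Qd i y)) / 2"
    by (simp add: sum.distrib[symmetric] Qd_mid sum_divide_distrib[symmetric])
  then show ?thesis unfolding Qall_def using card_pos by (simp add: field_simps)
qed

lemma Pen_ge: "Pen z \<ge> 0"
proof -
  have "(1 - (rho i)^2) \<ge> 0" for i
  proof -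
    have "\<bar>rho i\<bar> < 1" using rhob[of i] by auto
    then have "\<bar>rho i\<bar>^2 \<le> 1^2" by (intro power_mono) auto
    then show ?thesis by simp
  qed
  then show ?thesis unfolding Pen_def by (intro sum_nonneg add_nonneg_nonneg) auto
qed

lemma Pen_mid: "Pen ((1/2) *\<^sub>R (a+b)) \<le> (Pen a + Pen b) / 2"
proof -
  define u where "u (z::(real^'n^'n) \<times> (real^'n)) i = nu i - nu i * (\<Sum>j\<in>UNIV. fst z $ j $ i) - rho i * \<sigma> / sqrt (real CARD('n)) * (\<Sum>j\<in>UNIV. snd z $ j)" for z i
  define v where "v (z::(real^'n^'n) \<times> (real^'n)) = (\<Sum>j\<in>UNIV. snd z $ j)" for z
  define k where "k i = (1 - (rho i)^2) * \<sigma>^2 / real CARD('n)" for i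
  have k0: "k i \<ge> 0" for i
  proof -
    have "\<bar>rho i\<bar> < 1" using rhob[of i] by auto
    then have "\<bar>rho i\<bar>^2 \<le> 1^2" by (intro power_mono) auto
    then show ?thesis unfolding k_def by simp
  qed
  have P: "Pen z = (\<Sum>i\<in>UNIV. (u z i)^2 + k i * (v z)^2)" for z
    unfolding Pen_def u_def v_def k_def by simp
  have um: "u ((1/2) *\<^sub>R (a+b)) i = (u a i + u b i) / 2" for i
    unfolding u_def by (simp add: sum.distrib algebra_simps sum_divide_distrib[symmetric] add_divide_distrib)
  have vm: "v ((1/2) *\<^sub>R (a+b)) = (v a + v b) / 2"
    unfolding v_def by (simp add: sum.distrib sum_divide_distrib[symmetric])
  have sq: "((p + q) / 2)^2 \<le> (p^2 + q^2) / 2" for p q :: real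
  proof -
    have "0 \<le> (p - q)^2" by simp
    then show ?thesis by (simp add: power2_eq_square field_simps)
  qed
  have "Pen ((1/2) *\<^sub>R (a+b)) = (\<Sum>i\<in>UNIV. ((u a i + u b i) / 2)^2 + k i * ((v a + v b) / 2)^2)"
    unfolding P um vm ..
  also have "\<dots> \<le> (\<Sum>i\<in>UNIV. ((u a i)^2 + (u b i)^2) / 2 + k i * (((v a)^2 + (v b)^2) / 2))"
    by (intro sum_mono add_mono sq mult_left_mono k0)
  also have "\<dots> = (Pen a + Pen b) / 2"
    unfolding P by (simp add: sum.distrib sum_divide_distrib[symmetric] algebra_simps add_divide_distrib)
  finally show ?thesis .
qed

lemma Pen_cont: "continuous_on UNIV Pen"
  unfolding Pen_def using sq_pos card_pos by (auto intro!: continuous_intros)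

lemma Qall_cont: "continuous_on UNIV Qall"
proof -
  have "c i \<noteq> 0" for i using cpos[of i] by simp
  then show ?thesis unfolding Qall_def Qd_def using sq_pos card_pos by (auto intro!: continuous_intros)
qed

lemma fobj_cont: "continuous_on UNIV (fobj \<sigma> g c gam nu rho)"
proof -
  have "fobj \<sigma> g c gam nu rho = (\<lambda>z. fobj \<sigma> 0 c gam nu rho z0 - Qall (z - z0) - g / (2 * (real CARD('n))^2) * Pen z)"
    using expand by blast
  moreover have "continuous_on UNIV (\<lambda>z. fobj \<sigma> 0 c gam nu rho z0 - Qall (z - z0) - g / (2 * (real CARD('n))^2) * Pen z)"
    by (intro continuous_intros continuous_on_compose2[OF Qall_cont] Pen_cont) auto
  ultimately show ?thesis by simp
qed

end

context mt begin

definition Dd :: "'n \<Rightarrow> real" where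
  "Dd i = Acoef c gam nu i * c i * nu i * (real CARD('n) - pi_coef c gam nu rho i)"

lemma D_pos: "Dd i > 0"
  unfolding Dd_def using A_pos[of i] cpos[of i] nupos[of i] pi_lt[of i] by simp

lemma tt_D: "tt i = - rho i / Dd i" unfolding tt_def Dd_def ..

lemma Qall0: "Qall 0 = 0"
proof -
  have "Qall 0 \<ge> 0" using Qall_ge[of 0] by simp
  moreover have "Qall 0 \<le> 0" using Qall_mid[of 0 0] by simp
  ultimately show ?thesis by simp
qed

lemma Qall_nonneg: "Qall d \<ge> 0"
proof -
  have "mu / real CARD('n) * (norm d)^2 \<ge> 0" using mu_pos card_pos by simp
  then show ?thesis using Qall_ge[of d] by linarith
qed

lemma max_facts:
  assumes g: "g \<ge> 0"
  shows "(\<exists>!z. is_global_max (fobj \<sigma> g c gam nu rho) z)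
    \<and> (\<forall>z. is_global_max (fobj \<sigma> g c gam nu rho) z \<longrightarrow>
        (mu / real CARD('n)) * (norm (z - z0))^2 \<le> g / (2 * (real CARD('n))^2) * Pen z0)"
proof -
  define k where "k = g / (2 * (real CARD('n))^2)"
  have k0: "k \<ge> 0" unfolding k_def using g by simp
  have e: "\<And>z. fobj \<sigma> g c gam nu rho z = fobj \<sigma> 0 c gam nu rho z0 - Qall (z - z0) - (\<lambda>z. k * Pen z) z"
    unfolding k_def by (rule expand)
  have m: "mu / real CARD('n) > 0" using mu_pos card_pos by simp
  have pg: "\<And>z. (\<lambda>z. k * Pen z) z \<ge> 0" using k0 Pen_ge by simp
  have pm: "(\<lambda>z. k * Pen z) ((1/2) *\<^sub>R (a+b)) \<le> ((\<lambda>z. k * Pen z) a + (\<lambda>z. k * Pen z) b)/2" for a b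
  proof -
    have "k * Pen ((1/2) *\<^sub>R (a+b)) \<le> k * ((Pen a + Pen b) / 2)"
      by (rule mult_left_mono[OF Pen_mid k0])
    then show ?thesis by (simp add: algebra_simps add_divide_distrib)
  qed
  have "(\<exists>!z. is_global_max (fobj \<sigma> g c gam nu rho) z)
    \<and> (\<forall>z. is_global_max (fobj \<sigma> g c gam nu rho) z \<longrightarrow>
        (mu / real CARD('n)) * (norm (z - z0))^2 \<le> (\<lambda>z. k * Pen z) z0)"
    by (rule abstract_max[OF fobj_cont e Qall_ge m pg Qall_mid pm])
  then show ?thesis unfolding k_def by simp
qed

lemma z0_max: "is_global_max (fobj \<sigma> 0 c gam nu rho) z0"
  unfolding is_global_max_def
proof
  fix w
  have "fobj \<sigma> 0 c gam nu rho w = fobj \<sigma> 0 c gam nu rho z0 - Qall (w - z0) - 0 / (2 * (real CARD('n))^2) * Pen w"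
    by (rule expand)
  then show "fobj \<sigma> 0 c gam nu rho w \<le> fobj \<sigma> 0 c gam nu rho z0" using Qall_nonneg[of "w - z0"] by simp
qed

lemma THE0: "(THE z. is_global_max (fobj \<sigma> 0 c gam nu rho) z) = z0"
  using max_facts[of 0] z0_max by (auto intro: the1_equality)

lemma limit: "((\<lambda>gP. THE z. is_global_max (fobj \<sigma> gP c gam nu rho) z) \<longlongrightarrow> z0) (at_right 0)"
proof -
  define C where "C = Pen z0 / (2 * (real CARD('n))^2) / (mu / real CARD('n))"
  have m: "mu / real CARD('n) > 0" using mu_pos card_pos by simp
  have bound: "norm ((THE z. is_global_max (fobj \<sigma> g c gam nu rho) z) - z0) \<le> sqrt (g * C)" if g: "g > 0" for g
  proof -
    let ?z = "THE z. is_global_max (fobj \<sigma> g c gam nu rho) z"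
    have "\<exists>!z. is_global_max (fobj \<sigma> g c gam nu rho) z" using max_facts[of g] g by simp
    then have "is_global_max (fobj \<sigma> g c gam nu rho) ?z" by (rule theI')
    then have "(mu / real CARD('n)) * (norm (?z - z0))^2 \<le> g / (2 * (real CARD('n))^2) * Pen z0"
      by (rule conjunct2[OF max_facts[OF less_imp_le[OF g]], rule_format])
    then have "(norm (?z - z0))^2 \<le> g * C" unfolding C_def using m by (simp add: field_simps)
    then show ?thesis by (simp add: real_le_rsqrt)
  qed
  have "((\<lambda>g. sqrt (g * C)) \<longlongrightarrow> sqrt (0 * C)) (at_right 0)"
    by (intro tendsto_intros)
  then have lim0: "((\<lambda>g. sqrt (g * C)) \<longlongrightarrow> 0) (at_right 0)" by simp
  have "((\<lambda>g. (THE z. is_global_max (fobj \<sigma> g c gam nu rho) z) - z0) \<longlongrightarrow> 0) (at_right 0)"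
  proof (rule Lim_null_comparison[OF _ lim0])
    show "\<forall>\<^sub>F x in at_right 0. norm ((THE z. is_global_max (fobj \<sigma> x c gam nu rho) z) - z0) \<le> sqrt (x * C)"
      using eventually_at_right_less[of "0::real"] by (rule eventually_mono) (rule bound)
  qed
  then show ?thesis by (rule LIM_zero_cancel)
qed

end

theorem mainTheorem11:
  fixes \<sigma> :: real and c gam nu rho :: "'n::finite \<Rightarrow> real"
  assumes "\<sigma> > 0"
    and "\<And>i. c i > 0" and "\<And>i. gam i > 0" and "\<And>i. nu i > 0"
    and "\<And>i. -1 < rho i \<and> rho i < 1"
  shows "(\<exists>!z. is_global_max (fobj \<sigma> 0 c gam nu rho) z)
    \<and> ((\<lambda>gP. THE z. is_global_max (fobj \<sigma> gP c gam nu rho) z)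
           \<longlongrightarrow> (THE z. is_global_max (fobj \<sigma> 0 c gam nu rho) z)) (at_right 0)
    \<and> (let z0 = (THE z. is_global_max (fobj \<sigma> 0 c gam nu rho) z);
             n = real CARD('n);
             s = (\<lambda>i. snd z0 $ i);
             q = (\<lambda>i j. nu j * (fst z0 $ i $ j));
             A = Acoef c gam nu;
             p = pi_coef c gam nu rho
         in (\<forall>i j. j \<noteq> i \<longrightarrow> q i j = - (\<sigma> / sqrt n) * s i * rho j)
          \<and> (\<forall>i. q i i = 1 / A i * (1 / (c i * nu i) - gam i * \<sigma> / sqrt n * rho i * s i))
          \<and> (\<forall>i. s i = - (sqrt n / \<sigma>) * rho i / (A i * c i * nu i * (n - p i)))
          \<and> (\<forall>i. 0 \<le> p i \<and> p i < n)
          \<and> (\<forall>i. sgn (s i) = - sgn (rho i))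
          \<and> (\<forall>i. fst z0 $ i $ i > 0)
          \<and> (\<forall>i j. j \<noteq> i \<longrightarrow> sgn (fst z0 $ i $ j) = sgn (rho i * rho j)))"
proof -
  interpret mt \<sigma> c gam nu rho using assms by unfold_locales auto
  let ?n = "real CARD('n)" and ?sq = "sqrt (real CARD('n))"
  have P1: "\<exists>!z. is_global_max (fobj \<sigma> 0 c gam nu rho) z" using max_facts[of 0] by simp
  have P2: "((\<lambda>gP. THE z. is_global_max (fobj \<sigma> gP c gam nu rho) z)
           \<longlongrightarrow> (THE z. is_global_max (fobj \<sigma> 0 c gam nu rho) z)) (at_right 0)"
    unfolding THE0 by (rule limit)
  have s0: "\<sigma> / ?sq * snd z0 $ i = tt i" for i by (rule s0_tt)
  have a: "nu j * fst z0 $ i $ j = - (\<sigma> / ?sq) * snd z0 $ i * rho j" if "j \<noteq> i" for i j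
  proof -
    have "nu j * fst z0 $ i $ j = - tt i * rho j" using that nu_ne[of j] by (simp add: z0Q)
    also have "\<dots> = - (\<sigma> / ?sq * snd z0 $ i) * rho j" using s0[of i] by simp
    finally show ?thesis by simp
  qed
  have b: "nu i * fst z0 $ i $ i = 1 / Acoef c gam nu i * (1 / (c i * nu i) - gam i * \<sigma> / ?sq * rho i * snd z0 $ i)" for i
  proof -
    have "gam i * \<sigma> / ?sq * rho i * snd z0 $ i = gam i * rho i * (\<sigma> / ?sq * snd z0 $ i)"
      by (simp add: divide_inverse ac_simps)
    also have "\<dots> = gam i * tt i * rho i" using s0[of i] by simp
    finally have "gam i * \<sigma> / ?sq * rho i * snd z0 $ i = gam i * tt i * rho i" .
    then show ?thesis using nu_ne[of i] by (simp add: z0Q qd_def)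
  qed
  have cc: "snd z0 $ i = - (?sq / \<sigma>) * rho i / (Acoef c gam nu i * c i * nu i * (?n - pi_coef c gam nu rho i))" for i
    unfolding z0S tt_def by simp
  have e: "sgn (snd z0 $ i) = - sgn (rho i)" for i
  proof -
    define K where "K = ?sq / (\<sigma> * Dd i)"
    have "snd z0 $ i = - rho i * K" unfolding z0S tt_D K_def by (simp add: ac_simps)
    moreover have "K > 0" unfolding K_def using sq_pos sig D_pos[of i] by simp
    ultimately show ?thesis by (simp add: sgn_mult)
  qed
  have f: "fst z0 $ i $ i > 0" for i
  proof -
    have "- (gam i * tt i * rho i) = gam i * (rho i)^2 / Dd i" unfolding tt_D by (simp add: power2_eq_square)
    moreover have "gam i * (rho i)^2 / Dd i \<ge> 0" using gpos[of i] D_pos[of i] by simp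
    moreover have "1 / (c i * nu i) > 0" using cpos[of i] nupos[of i] by simp
    ultimately have "1 / (c i * nu i) - gam i * tt i * rho i > 0" by linarith
    then have "qd i > 0" unfolding qd_def using A_pos[of i] by simp
    then show ?thesis using nupos[of i] by (simp add: z0Q)
  qed
  have g: "sgn (fst z0 $ i $ j) = sgn (rho i * rho j)" if "j \<noteq> i" for i j
  proof -
    define K where "K = 1 / (Dd i * nu j)"
    have "fst z0 $ i $ j = (rho i * rho j) * K" using that unfolding K_def by (simp add: z0Q tt_D)
    moreover have "K > 0" unfolding K_def using D_pos[of i] nupos[of j] by simp
    ultimately show ?thesis by (simp add: sgn_mult)
  qed
  show ?thesis
    unfolding Let_def THE0
    by (intro conjI allI impI) (rule P1, rule limit, erule a, rule b, rule cc, rule pi_nonneg, rule pi_lt, rule e, rule f, erule g)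
qed

end
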